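(* The power series $[\sqrt2]_q$, $[\sqrt3]_q$, $[\sqrt5]_q$, $[\sqrt7]_q\in\mathbb{Z}[[q]]$ satisfy $$\begin{aligned} q^2[\sqrt2]_q^2-(q^3-1)[\sqrt2]_q&=q^2+1,\\ q^2[\sqrt3]_q^2-(q^3+q^2-q-1)[\sqrt3]_q&=q^2+q+1,\\ q^3[\sqrt5]_q^2-(q^5+q^3-q^2-1)[\sqrt5]_q&=q^4+q^3+q^2+q+1,\\ q^3[\sqrt7]_q^2-(q^5+q^4-q-1)[\sqrt7]_q&=q^4+2q^3+q^2+2q+1. \end{aligned}$$
   Context: For an integer $a\geq1$ put $[a]_q=1+q+\cdots+q^{a-1}$ and $[a]_{q^{-1}}=1+q^{-1}+\cdots+q^{-(a-1)}$. Every rational number $r/s>1$ has a unique even-length regular continued fraction $r/s=[a_1,\ldots,a_{2m}]$ with $a_i\in\mathbb{Z}_{\geq1}$. Its $q$-deformation is the rational function $$\left[\tfrac{r}{s}\right]_q=[a_1]_q+\cfrac{q^{a_1}}{[a_2]_{q^{-1}}+\cfrac{q^{-a_2}}{[a_3]_q+\cfrac{q^{a_3}}{\ddots+\cfrac{q^{a_{2m-1}}}{[a_{2m}]_{q^{-1}}}}}}.$$ One also sets $[1]_q=1$. Each $[r/s]_q$ is identified with its Taylor expansion at $q=0$. For an irrational real number $x>1$ with continued fraction $x=[a_1,a_2,\ldots]$ and convergents $x_n=[a_1,\ldots,a_n]$, define $$[x]_q:=\sum_{k\geq0}\varkappa_kq^k,\qquad \varkappa_k=\lim_{n\to\infty}\bigl(\text{coefficient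 of }q^k\text{ in }[x_n]_q\bigr).$$ These limits exist and are eventually attained. The continued fractions are $\sqrt2=[1,\overline{2}]$, $\sqrt3=[1,\overline{1,2}]$, $\sqrt5=[2,\overline{4}]$ and $\sqrt7=[2,\overline{1,1,1,4}]$, where the bar denotes the periodically repeated block. *)

theory Defs
  imports "HOL-Analysis.Analysis" "HOL-Computational_Algebra.Formal_Laurent_Series"
begin

fun cf_val :: "nat list \<Rightarrow> rat" where
  "cf_val [] = 0"
| "cf_val [a] = of_nat a"
| "cf_val (a # l) = of_nat a + 1 / cf_val l"

definition qint :: "bool \<Rightarrow> nat \<Rightarrow> real fls" where
  "qint b a = (\<Sum>i<a. (if b then fls_X else fls_X_inv) ^ i)"

definition qpow :: "bool \<Rightarrow> nat \<Rightarrow> real fls" where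
  "qpow b a = (if b then fls_X else fls_X_inv) ^ a"

text \<open>The q-deformed continued fraction
  [a_1]_q + q^{a_1}/([a_2]_{q^{-1}} + q^{-a_2}/([a_3]_q + ...)),
  evaluated in the field of formal Laurent series (which contains the rational functions
  via their expansions at q = 0).\<close>
fun qcf :: "bool \<Rightarrow> nat list \<Rightarrow> real fls" where
  "qcf b [] = 0"
| "qcf b [a] = qint b a"
| "qcf b (a # l) = qint b a + qpow b a / qcf (\<not> b) l"

text \<open>[r/s]_q for a rational r/s \<ge> 1, via its unique even-length continued fraction.\<close>
definition qrat :: "rat \<Rightarrow> real fls" where
  "qrat r = (if r = 1 then 1 else
     qcf True (THE l. l \<noteq> [] \<and> even (length l) \<and> (\<forall>a\<in>set l. a \<ge> 1) \<and> cf_val l = r))"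

fun cf_rem :: "real \<Rightarrow> nat \<Rightarrow> real" where
  "cf_rem x 0 = x"
| "cf_rem x (Suc n) = 1 / (cf_rem x n - of_int \<lfloor>cf_rem x n\<rfloor>)"

definition cf_terms :: "real \<Rightarrow> nat \<Rightarrow> nat" where
  "cf_terms x i = nat \<lfloor>cf_rem x i\<rfloor>"

text \<open>n-th convergent x_n = [a_1,...,a_n] (n \<ge> 1).\<close>
definition convergent_cf :: "real \<Rightarrow> nat \<Rightarrow> rat" where
  "convergent_cf x n = cf_val (map (cf_terms x) [0..<n])"

text \<open>[x]_q for irrational x > 1: coefficientwise limit of [x_n]_q.\<close>
definition qreal :: "real \<Rightarrow> real fps" where
  "qreal x = Abs_fps (\<lambda>k. lim (\<lambda>n. fls_nth (qrat (convergent_cf x (Suc n))) (int k)))"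

end

theory Submission
  imports Defs
begin


definition small :: "int \<Rightarrow> real fls \<Rightarrow> bool" where
  "small N f \<longleftrightarrow> (\<forall>k<N. fls_nth f k = 0)"

lemma small_mono: "small N f \<Longrightarrow> M \<le> N \<Longrightarrow> small M f"
  unfolding small_def by auto

lemma small_zero[simp]: "small N 0"
  unfolding small_def by auto

lemma small_add: "small N f \<Longrightarrow> small N g \<Longrightarrow> small N (f + g)"
  unfolding small_def by auto

lemma small_diff: "small N f \<Longrightarrow> small N g \<Longrightarrow> small N (f - g)"
  unfolding small_def by auto

lemma small_uminus: "small N f \<Longrightarrow> small N (- f)"
  unfolding small_def by auto

lemma small_subdeg: "small (fls_subdegree f) f"
  unfolding small_def by auto

lemma small_imp_subdeg: "small N f \<Longrightarrow> f \<noteq> 0 \<Longrightarrow> N \<le> fls_subdegree f"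
  unfolding small_def by (intro fls_subdegree_geI) auto

lemma small_mult: "small N f \<Longrightarrow> small M g \<Longrightarrow> small (N + M) (f * g)"
proof -
  assume a: "small N f" "small M g"
  show ?thesis
  proof (cases "f = 0 \<or> g = 0")
    case True then show ?thesis by auto
  next
    case False
    then have "N \<le> fls_subdegree f" "M \<le> fls_subdegree g" using a small_imp_subdeg by auto
    then show ?thesis unfolding small_def
      by (auto intro!: fls_times_nth_eq0)
  qed
qed

lemma small_inverse: "small (- fls_subdegree f) (inverse f)"
  using small_subdeg[of "inverse f"] by simp

lemma small_fps: "small 0 (fps_to_fls f)"
  unfolding small_def by auto

lemma small_eq_zero: assumes "\<And>N. small N f" shows "f = 0"
proof (rule ccontr)
  assume "f \<noteq> 0"
  then have "fls_nth f (fls_subdegree f) \<noteq> 0" by simp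
  moreover have "small (fls_subdegree f + 1) f" by (rule assms)
  ultimately show False unfolding small_def by auto
qed

lemma small_div_diff:
  fixes y y' c :: "real fls"
  assumes "y \<noteq> 0" "y' \<noteq> 0" "small M (y - y')"
  shows "small (M + fls_subdegree c - fls_subdegree y - fls_subdegree y') (c / y - c / y')"
proof -
  have eq: "c / y - c / y' = c * (- (y - y')) * inverse y * inverse y'"
    using assms by (simp add: field_simps)
  have "small (fls_subdegree c + M + - fls_subdegree y + - fls_subdegree y')
          (c * (- (y - y')) * inverse y * inverse y')"
    by (intro small_mult small_uminus small_subdeg small_inverse assms)
  then show ?thesis unfolding eq by (simp add: algebra_simps)
qed

lemma qint_True_nth: "fls_nth (qint True a) k = (if 0 \<le> k \<and> k < int a then 1 else 0)"
  by (induction a) (auto simp: qint_def)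

lemma qint_False_nth: "fls_nth (qint False a) k = (if - int a < k \<and> k \<le> 0 then 1 else 0)"
  by (induction a) (auto simp: qint_def)

lemma qint_Suc: "qint b (Suc a) = qint b a + qpow b a"
  by (simp add: qint_def qpow_def)

lemma qint_one[simp]: "qint b 1 = 1"
  by (simp add: qint_def)

lemma qpow_nz[simp]: "qpow b a \<noteq> 0"
  by (cases b) (simp_all add: qpow_def)

lemma qpow_subdeg: "fls_subdegree (qpow b a) = (if b then int a else - int a)"
  by (cases b) (simp_all add: qpow_def)

lemma qint_True_props: "a \<ge> 1 \<Longrightarrow> qint True a \<noteq> 0 \<and> fls_subdegree (qint True a) = 0"
proof -
  assume "a \<ge> 1"
  then have "fls_nth (qint True a) 0 = 1" by (simp add: qint_True_nth)
  moreover have "fls_subdegree (qint True a) = 0"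
    by (rule fls_subdegree_eqI) (use \<open>a \<ge> 1\<close> in \<open>auto simp: qint_True_nth\<close>)
  ultimately show ?thesis by auto
qed

lemma qint_False_props: "a \<ge> 1 \<Longrightarrow> qint False a \<noteq> 0 \<and> fls_subdegree (qint False a) \<le> 0
   \<and> small (1 - int a) (qint False a)"
proof -
  assume "a \<ge> 1"
  then have "fls_nth (qint False a) 0 = 1" by (simp add: qint_False_nth)
  moreover have "small (1 - int a) (qint False a)"
    unfolding small_def by (auto simp: qint_False_nth)
  ultimately show ?thesis by (auto intro: fls_subdegree_leI)
qed

lemma T_props:
  fixes y :: "real fls"
  assumes "a \<ge> 1" "y \<noteq> 0" "fls_subdegree y \<le> 0"
  shows "qint True a + qpow True a / y \<noteq> 0 \<and> fls_subdegree (qint True a + qpow True a / y) = 0"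
proof -
  have g: "fls_subdegree (qpow True a / y) = int a - fls_subdegree y"
    using assms by (simp add: fls_divide_subdegree qpow_subdeg)
  have "fls_subdegree (qint True a + qpow True a / y) = fls_subdegree (qint True a)"
    by (rule fls_subdegree_add_eq1) (use qint_True_props[OF assms(1)] g assms in auto)
  moreover have "fls_nth (qint True a + qpow True a / y) 0 = 1"
    using g assms by (simp add: qint_True_nth)
  then have "qint True a + qpow True a / y \<noteq> 0" by (intro notI) simp
  ultimately show ?thesis using qint_True_props[OF assms(1)] by simp
qed

lemma U_props:
  fixes z :: "real fls"
  assumes "a \<ge> 1" "z \<noteq> 0" "fls_subdegree z = 0"
  shows "qint False a + qpow False a / z \<noteq> 0 \<and> fls_subdegree (qint False a + qpow False a / z) = - int a"
proof -
  have g: "fls_subdegree (qpow False a / z) = - int a"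
    using assms by (simp add: fls_divide_subdegree qpow_subdeg)
  have nz: "qpow False a / z \<noteq> 0" using assms by simp
  have "qint False a \<noteq> 0" "small (1 - int a) (qint False a)" using qint_False_props[OF assms(1)] by auto
  then have "- int a < fls_subdegree (qint False a)" using small_imp_subdeg by fastforce
  then have "fls_subdegree (qint False a + qpow False a / z) = - int a"
    using fls_subdegree_add_eq2[OF nz] g by simp
  moreover have "qint False a + qpow False a / z \<noteq> 0"
  proof
    assume "qint False a + qpow False a / z = 0"
    then have "qpow False a / z = - qint False a" by (simp add: eq_neg_iff_add_eq_0 add.commute)
    then show False using g \<open>- int a < fls_subdegree (qint False a)\<close> by simp
  qed
  ultimately show ?thesis by auto
qed

lemma qcf_Cons: "l \<noteq> [] \<Longrightarrow> qcf b (a # l) = qint b a + qpow b a / qcf (\<not> b) l"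
  by (cases l) auto

lemma qcf_props:
  "l \<noteq> [] \<Longrightarrow> \<forall>x\<in>set l. x \<ge> 1 \<Longrightarrow>
    (qcf True l \<noteq> 0 \<and> fls_subdegree (qcf True l) = 0) \<and>
    (qcf False l \<noteq> 0 \<and> fls_subdegree (qcf False l) \<le> 0)"
proof (induction l)
  case Nil then show ?case by simp
next
  case (Cons a l)
  show ?case
  proof (cases "l = []")
    case True
    then show ?thesis using Cons qint_True_props[of a] qint_False_props[of a] by auto
  next
    case False
    then have ih: "(qcf True l \<noteq> 0 \<and> fls_subdegree (qcf True l) = 0) \<and>
      (qcf False l \<noteq> 0 \<and> fls_subdegree (qcf False l) \<le> 0)" using Cons by auto
    have a: "a \<ge> 1" using Cons by auto
    show ?thesis using T_props[OF a, of "qcf False l"] U_props[OF a, of "qcf True l"] ih False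
      by (auto simp: qcf_Cons)
  qed
qed

lemma qcf_False_long:
  "l \<noteq> [] \<Longrightarrow> \<forall>x\<in>set (a # l). x \<ge> 1 \<Longrightarrow>
    qcf False (a # l) \<noteq> 0 \<and> fls_subdegree (qcf False (a # l)) = - int a"
  using U_props[of a "qcf True l"] qcf_props[of l] by (auto simp: qcf_Cons)



lemma contract:
  assumes "\<forall>x\<in>set p. x \<ge> 1" "even (length p)" "r \<noteq> []" "r' \<noteq> []"
    "\<forall>x\<in>set r. x \<ge> 1" "\<forall>x\<in>set r'. x \<ge> 1" "small N (qcf True r - qcf True r')"
  shows "small (N + int (length p)) (qcf True (p @ r) - qcf True (p @ r'))"
  using assms
proof (induction p arbitrary: N rule: induct_list012)
  case 1 then show ?case by simp
next
  case (2 x) then show ?case by simp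
next
  case (3 x y zs)
  define s where "s = zs @ r"
  define s' where "s' = zs @ r'"
  have ih: "small (N + int (length zs)) (qcf True s - qcf True s')"
    using 3 unfolding s_def s'_def by auto
  have sne: "s \<noteq> []" "s' \<noteq> []" using 3 by (auto simp: s_def s'_def)
  have s1: "\<forall>x\<in>set s. x \<ge> 1" "\<forall>x\<in>set s'. x \<ge> 1" using 3 by (auto simp: s_def s'_def)
  have xy: "x \<ge> 1" "y \<ge> 1" using 3 by auto
  have pz: "qcf True s \<noteq> 0" "fls_subdegree (qcf True s) = 0"
    "qcf True s' \<noteq> 0" "fls_subdegree (qcf True s') = 0"
    using qcf_props[OF sne(1) s1(1)] qcf_props[OF sne(2) s1(2)] by auto
  have F: "small (N + int (length zs) - int y) (qcf False (y # s) - qcf False (y # s'))"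
  proof -
    have "small (N + int (length zs) + fls_subdegree (qpow False y) - fls_subdegree (qcf True s)
        - fls_subdegree (qcf True s')) (qpow False y / qcf True s - qpow False y / qcf True s')"
      by (rule small_div_diff) (use pz ih in auto)
    then show ?thesis using pz sne by (simp add: qcf_Cons qpow_subdeg)
  qed
  have py: "qcf False (y # s) \<noteq> 0" "fls_subdegree (qcf False (y # s)) = - int y"
    "qcf False (y # s') \<noteq> 0" "fls_subdegree (qcf False (y # s')) = - int y"
    using qcf_False_long[OF sne(1), of y] qcf_False_long[OF sne(2), of y] s1 xy by auto
  have "small (N + int (length zs) - int y + fls_subdegree (qpow True x)
      - fls_subdegree (qcf False (y # s)) - fls_subdegree (qcf False (y # s')))
      (qpow True x / qcf False (y # s) - qpow True x / qcf False (y # s'))"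
    by (rule small_div_diff) (use py F in auto)
  then have "small (N + int (length zs) + int x + int y) (qcf True (x # y # s) - qcf True (x # y # s'))"
    using py by (simp add: qcf_Cons qpow_subdeg algebra_simps)
  then have "small (N + int (length (x # y # zs))) (qcf True (x # y # zs @ r) - qcf True (x # y # zs @ r'))"
    unfolding s_def s'_def by (rule small_mono) (use xy in auto)
  then show ?case by simp
qed

definition Vc :: "(nat \<Rightarrow> nat) \<Rightarrow> nat \<Rightarrow> real fls" where
  "Vc t n = qcf True (map t [0..<n])"

lemma Vc_props: "\<forall>i. t i \<ge> 1 \<Longrightarrow> n \<ge> 1 \<Longrightarrow> Vc t n \<noteq> 0 \<and> fls_subdegree (Vc t n) = 0"
  unfolding Vc_def using qcf_props[of "map t [0..<n]"] by auto

lemma upt_split: "m \<le> n \<Longrightarrow> [0..<n] = [0..<m] @ [m..<n]"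
  by (metis le_add_diff_inverse upt_add_eq_append zero_le)

lemma consec:
  assumes t: "\<forall>i. t i \<ge> 1" and n: "n \<ge> 1"
  shows "small (int n - 2) (Vc t (Suc n) - Vc t n)"
proof -
  define m where "m = 2 * ((n - 1) div 2)"
  have m: "m < n" "int n - 2 \<le> int m" "even m" unfolding m_def using n by auto
  define p where "p = map t [0..<m]"
  define r where "r = map t [m..<n]"
  define r' where "r' = map t [m..<Suc n]"
  have e1: "map t [0..<n] = p @ r" unfolding p_def r_def using upt_split[of m n] m by simp
  have e2: "map t [0..<Suc n] = p @ r'" unfolding p_def r'_def using upt_split[of m "Suc n"] m by simp
  have ne: "r \<noteq> []" "r' \<noteq> []" using m unfolding r_def r'_def by auto
  have one: "\<forall>x\<in>set r. x \<ge> 1" "\<forall>x\<in>set r'. x \<ge> 1" "\<forall>x\<in>set p. x \<ge> 1"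
    using t unfolding r_def r'_def p_def by auto
  have "small 0 (qcf True r)" "small 0 (qcf True r')"
    using qcf_props[OF ne(1) one(1)] qcf_props[OF ne(2) one(2)] small_subdeg by metis+
  then have "small 0 (qcf True r' - qcf True r)" by (intro small_diff)
  then have "small (0 + int (length p)) (qcf True (p @ r') - qcf True (p @ r))"
    using contract[OF one(3) _ ne(2) ne(1) one(2) one(1), of 0] m by (simp add: p_def)
  then have "small (int m) (Vc t (Suc n) - Vc t n)"
    unfolding Vc_def e1 e2 by (simp add: p_def)
  then show ?thesis by (rule small_mono) (use m in auto)
qed

lemma far:
  assumes t: "\<forall>i. t i \<ge> 1" and n: "n \<ge> 1" and nm: "n \<le> m"
  shows "small (int n - 2) (Vc t m - Vc t n)"
  using nm
proof (induction m rule: dec_induct)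
  case base then show ?case by simp
next
  case (step m)
  have "small (int m - 2) (Vc t (Suc m) - Vc t m)" using consec[OF t] step n by auto
  then have "small (int n - 2) (Vc t (Suc m) - Vc t m)" by (rule small_mono) (use step in auto)
  then have "small (int n - 2) ((Vc t (Suc m) - Vc t m) + (Vc t m - Vc t n))"
    using step by (intro small_add)
  then show ?case by simp
qed



lemma cf_val_Cons: "l \<noteq> [] \<Longrightarrow> cf_val (a # l) = of_nat a + 1 / cf_val l"
  by (cases l) auto

lemma cf_val_ge1: "l \<noteq> [] \<Longrightarrow> \<forall>x\<in>set l. x \<ge> 1 \<Longrightarrow> cf_val l \<ge> 1"
proof (induction l)
  case Nil then show ?case by simp
next
  case (Cons a l)
  show ?case
  proof (cases "l = []")
    case True then show ?thesis using Cons by simp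
  next
    case False
    then have "cf_val l \<ge> 1" using Cons by auto
    then have "1 / cf_val l \<ge> 0" by simp
    moreover have "(of_nat a :: rat) \<ge> 1" using Cons by simp
    moreover have "cf_val (a # l) = of_nat a + 1 / cf_val l" using False by (simp add: cf_val_Cons)
    ultimately show ?thesis by linarith
  qed
qed

lemma cf_val_gt1:
  assumes h: "l \<noteq> []" "\<forall>x\<in>set l. x \<ge> 1" "l \<noteq> [1]"
  shows "cf_val l > 1"
proof (cases l)
  case Nil then show ?thesis using h by simp
next
  case (Cons a m)
  show ?thesis
  proof (cases "m = []")
    case True then show ?thesis using h Cons by auto
  next
    case False
    then have "cf_val m \<ge> 1" using h Cons cf_val_ge1 by auto
    then have "1 / cf_val m > 0" by simp
    moreover have "(of_nat a :: rat) \<ge> 1" using h Cons by simp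
    moreover have "cf_val l = of_nat a + 1 / cf_val m" using False Cons by (simp add: cf_val_Cons)
    ultimately show ?thesis by linarith
  qed
qed

lemma long_frac: "m \<noteq> [] \<Longrightarrow> \<forall>x\<in>set m. x \<ge> 1 \<Longrightarrow> m \<noteq> [1] \<Longrightarrow>
   0 < 1 / cf_val m \<and> 1 / cf_val m < 1"
  using cf_val_gt1[of m] by (simp add: divide_less_eq)

lemma split_int:
  fixes y y' :: rat
  assumes "of_nat a + y = of_nat a' + y'" "0 \<le> y" "y < 1" "0 \<le> y'" "y' < 1"
  shows "a = a' \<and> y = y'"
proof -
  have "\<not> a' < a"
  proof
    assume "a' < a"
    then have "of_nat a' + 1 \<le> (of_nat a :: rat)"
      by (metis Suc_leI of_nat_Suc of_nat_le_iff add.commute)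
    then show False using assms by linarith
  qed
  moreover have "\<not> a < a'"
  proof
    assume "a < a'"
    then have "of_nat a + 1 \<le> (of_nat a' :: rat)"
      by (metis Suc_leI of_nat_Suc of_nat_le_iff add.commute)
    then show False using assms by linarith
  qed
  ultimately have aa: "a = a'" by simp
  then have "of_nat a + y = of_nat a + y'" using assms(1) by simp
  then show ?thesis using aa by simp
qed

lemma cf_unique:
  "l \<noteq> [] \<Longrightarrow> l' \<noteq> [] \<Longrightarrow> \<forall>x\<in>set l. x \<ge> 1 \<Longrightarrow> \<forall>x\<in>set l'. x \<ge> 1 \<Longrightarrow>
   even (length l) = even (length l') \<Longrightarrow> cf_val l = cf_val l' \<Longrightarrow> l = l'"
proof (induction l arbitrary: l')
  case Nil then show ?case by simp
next
  case (Cons a m)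
  note h = Cons.prems
  obtain a' m' where l': "l' = a' # m'" using h by (cases l') auto
  show ?case
  proof (cases "m = []")
    case True
    show ?thesis
    proof (cases "m' = []")
      case True then show ?thesis using h l' \<open>m = []\<close> by simp
    next
      case False
      then have "m' \<noteq> [1]" using h l' \<open>m = []\<close> by auto
      then have fr: "0 < 1 / cf_val m' \<and> 1 / cf_val m' < 1" using long_frac[OF False] h l' by auto
      have "of_nat a + 0 = of_nat a' + 1 / cf_val m'"
        using h l' \<open>m = []\<close> False by (simp add: cf_val_Cons)
      then show ?thesis using split_int[of a 0 a' "1 / cf_val m'"] fr by auto
    qed
  next
    case mne: False
    show ?thesis
    proof (cases "m' = []")
      case True
      then have "m \<noteq> [1]" using h l' mne by auto
      then have fr: "0 < 1 / cf_val m \<and> 1 / cf_val m < 1" using long_frac[OF mne] h by auto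
      have "of_nat a' + 0 = of_nat a + 1 / cf_val m"
        using h l' True mne by (simp add: cf_val_Cons)
      then show ?thesis using split_int[of a' 0 a "1 / cf_val m"] fr by auto
    next
      case m'ne: False
      have eq: "of_nat a + 1 / cf_val m = of_nat a' + 1 / cf_val m'"
        using h l' mne m'ne by (simp add: cf_val_Cons)
      show ?thesis
      proof (cases "m = [1]")
        case m1: True
        show ?thesis
        proof (cases "m' = [1]")
          case True then show ?thesis using eq m1 l' by simp
        next
          case False
          then have fr: "0 < 1 / cf_val m' \<and> 1 / cf_val m' < 1" using long_frac[OF m'ne] h l' by auto
          have "of_nat (Suc a) + 0 = of_nat a' + 1 / cf_val m'" using eq m1 by simp
          then show ?thesis using split_int[of "Suc a" 0 a' "1 / cf_val m'"] fr by auto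
        qed
      next
        case m1: False
        then have fr: "0 < 1 / cf_val m \<and> 1 / cf_val m < 1" using long_frac[OF mne] h by auto
        show ?thesis
        proof (cases "m' = [1]")
          case True
          have "of_nat (Suc a') + 0 = of_nat a + 1 / cf_val m" using eq True by simp
          then show ?thesis using split_int[of "Suc a'" 0 a "1 / cf_val m"] fr by auto
        next
          case False
          then have fr': "0 < 1 / cf_val m' \<and> 1 / cf_val m' < 1" using long_frac[OF m'ne] h l' by auto
          have "a = a' \<and> 1 / cf_val m = 1 / cf_val m'"
            using split_int[OF eq] fr fr' by auto
          moreover have "m = m'"
          proof (rule Cons.IH)
            show "cf_val m = cf_val m'" using calculation by simp
          qed (use h l' mne m'ne in auto)
          ultimately show ?thesis using l' by simp
        qed
      qed
    qed
  qed
qed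

lemma cf_val_app: "s \<noteq> [] \<Longrightarrow> s' \<noteq> [] \<Longrightarrow> cf_val s = cf_val s' \<Longrightarrow> cf_val (p @ s) = cf_val (p @ s')"
  by (induction p) (auto simp: cf_val_Cons)

lemma qcf_app: "s \<noteq> [] \<Longrightarrow> s' \<noteq> [] \<Longrightarrow> (\<forall>b. qcf b s = qcf b s') \<Longrightarrow> qcf b (p @ s) = qcf b (p @ s')"
  by (induction p arbitrary: b) (auto simp: qcf_Cons)

lemma merge_cf: "cf_val (p @ [a, 1]) = cf_val (p @ [Suc a])"
  by (rule cf_val_app) auto

lemma merge_qcf: "qcf b (p @ [a, 1]) = qcf b (p @ [Suc a])"
  by (rule qcf_app) (auto simp: qint_Suc qint_def qpow_def)

lemma qrat_eq:
  assumes ne: "l \<noteq> []" and one: "\<forall>x\<in>set l. x \<ge> 1"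
  shows "qrat (cf_val l) = qcf True l"
proof (cases "cf_val l = 1")
  case True
  then have "l = [1]" using cf_val_gt1[OF ne one] by fastforce
  then show ?thesis by (simp add: qrat_def qint_def)
next
  case nv1: False
  have "\<exists>l'. l' \<noteq> [] \<and> even (length l') \<and> (\<forall>x\<in>set l'. x \<ge> 1) \<and> cf_val l' = cf_val l
      \<and> qcf True l' = qcf True l"
  proof (cases "even (length l)")
    case True then show ?thesis using ne one by blast
  next
    case odd: False
    obtain p x where l: "l = p @ [x]" using ne by (metis rev_exhaust)
    show ?thesis
    proof (cases "x \<ge> 2")
      case True
      define l' where "l' = p @ [x - 1, 1]"
      have "Suc (x - 1) = x" using True by simp
      then have "cf_val l' = cf_val l \<and> qcf True l' = qcf True l"
        unfolding l'_def l by (metis merge_cf merge_qcf)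
      moreover have "even (length l')" using odd l l'_def by simp
      moreover have "\<forall>x\<in>set l'. x \<ge> 1" using one l True l'_def by auto
      ultimately show ?thesis unfolding l'_def by blast
    next
      case False
      then have x1: "x = 1" using one l by auto
      have "p \<noteq> []" using nv1 l x1 by auto
      then obtain p' y where p: "p = p' @ [y]" by (metis rev_exhaust)
      define l' where "l' = p' @ [Suc y]"
      have "cf_val l' = cf_val l \<and> qcf True l' = qcf True l"
        unfolding l'_def l p x1 using merge_cf[of p' y] merge_qcf[of True p' y] by simp
      moreover have "even (length l')" using odd l p l'_def by simp
      moreover have "\<forall>x\<in>set l'. x \<ge> 1" using one l p l'_def by auto
      ultimately show ?thesis unfolding l'_def by blast
    qed
  qed
  then obtain l' where l': "l' \<noteq> []" "even (length l')" "\<forall>x\<in>set l'. x \<ge> 1" "cf_val l' = cf_val l"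
     "qcf True l' = qcf True l" by blast
  have "(THE l''. l'' \<noteq> [] \<and> even (length l'') \<and> (\<forall>a\<in>set l''. a \<ge> 1) \<and> cf_val l'' = cf_val l) = l'"
  proof (rule the_equality)
    show "l' \<noteq> [] \<and> even (length l') \<and> (\<forall>a\<in>set l'. a \<ge> 1) \<and> cf_val l' = cf_val l" using l' by blast
  next
    fix l'' assume "l'' \<noteq> [] \<and> even (length l'') \<and> (\<forall>a\<in>set l''. a \<ge> 1) \<and> cf_val l'' = cf_val l"
    then show "l'' = l'" using cf_unique[of l'' l'] l' by auto
  qed
  then show ?thesis using nv1 l' by (simp add: qrat_def)
qed



lemma lim_eventually_const:
  assumes "\<forall>n\<ge>N. f n = (c::real)" shows "lim f = c"
proof -
  have "eventually (\<lambda>n. f n = c) sequentially" using assms by (auto simp: eventually_sequentially)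
  then have "f \<longlonglongrightarrow> c" by (rule tendsto_eventually)
  then show ?thesis by (rule limI)
qed

lemma assemble:
  fixes A B C :: "real fps" and x :: real and t :: "nat \<Rightarrow> nat" and K :: int
  assumes t: "\<forall>i. t i \<ge> 1"
    and cv: "\<forall>n. qrat (convergent_cf x (Suc n)) = Vc t (Suc n)"
    and ev: "\<forall>n\<ge>2. small (int n - K) (fps_to_fls A * Vc t n ^ 2 + fps_to_fls B * Vc t n + fps_to_fls C)"
  shows "A * qreal x ^ 2 + B * qreal x + C = 0"
proof -
  have coef: "qreal x $ k = fls_nth (Vc t N) (int k)" if N: "N \<ge> k + 3" for k N
  proof -
    have "\<forall>n\<ge>N. fls_nth (qrat (convergent_cf x (Suc n))) (int k) = fls_nth (Vc t N) (int k)"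
    proof (intro allI impI)
      fix n assume "n \<ge> N"
      then have "small (int N - 2) (Vc t (Suc n) - Vc t N)" using far[OF t, of N "Suc n"] N by auto
      then have "fls_nth (Vc t (Suc n) - Vc t N) (int k) = 0" using N unfolding small_def by auto
      then show "fls_nth (qrat (convergent_cf x (Suc n))) (int k) = fls_nth (Vc t N) (int k)"
        using cv by simp
    qed
    then show ?thesis unfolding qreal_def by (simp add: lim_eventually_const)
  qed
  define S where "S = fps_to_fls (qreal x)"
  define E where "E y = fps_to_fls A * y ^ 2 + fps_to_fls B * y + fps_to_fls C" for y
  have close: "small (int N - 2) (S - Vc t N)" if N: "N \<ge> 3" for N
    unfolding small_def
  proof (intro allI impI)
    fix k :: int assume k: "k < int N - 2"
    have vp: "Vc t N \<noteq> 0" "fls_subdegree (Vc t N) = 0" using Vc_props[OF t, of N] N by auto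
    show "fls_nth (S - Vc t N) k = 0"
    proof (cases "k < 0")
      case True then show ?thesis using vp by (simp add: S_def)
    next
      case False
      then have "qreal x $ nat k = fls_nth (Vc t N) (int (nat k))" using k by (intro coef) auto
      then show ?thesis using False by (simp add: S_def)
    qed
  qed
  have "small M (E S)" for M
  proof -
    define N where "N = nat (\<bar>M\<bar> + \<bar>K\<bar> + 3)"
    have N: "N \<ge> 3" "int N - 2 \<ge> M" "int N - K \<ge> M" unfolding N_def by auto
    have vp: "Vc t N \<noteq> 0" "fls_subdegree (Vc t N) = 0" using Vc_props[OF t, of N] N by auto
    have s0: "small 0 (Vc t N)" using vp small_subdeg by metis
    have sS: "small 0 S" unfolding S_def by (rule small_fps)
    have "small 0 (S + Vc t N)" using sS s0 by (rule small_add)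
    then have "small (0 + 0) (fps_to_fls A * (S + Vc t N))" using small_fps by (intro small_mult)
    then have "small 0 (fps_to_fls A * (S + Vc t N) + fps_to_fls B)" using small_fps by (intro small_add) auto
    then have "small (int N - 2 + 0) ((S - Vc t N) * (fps_to_fls A * (S + Vc t N) + fps_to_fls B))"
      using close N by (intro small_mult) auto
    moreover have "(S - Vc t N) * (fps_to_fls A * (S + Vc t N) + fps_to_fls B) = E S - E (Vc t N)"
      unfolding E_def by (simp add: algebra_simps power2_eq_square)
    ultimately have "small (int N - 2) (E S - E (Vc t N))" by simp
    then have "small M (E S - E (Vc t N))" by (rule small_mono) (use N in auto)
    moreover have "small M (E (Vc t N))"
    proof (rule small_mono[of "int N - K"])
      show "small (int N - K) (E (Vc t N))" using ev N unfolding E_def by auto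
    qed (use N in auto)
    ultimately have "small M ((E S - E (Vc t N)) + E (Vc t N))" by (rule small_add)
    then show ?thesis by simp
  qed
  then have "E S = 0" by (rule small_eq_zero)
  then have "fps_to_fls (A * qreal x ^ 2 + B * qreal x + C) = 0"
    unfolding E_def S_def by (simp add: fls_times_fps_to_fls fps_to_fls_power)
  then show ?thesis by (simp only: fps_to_fls_eq_0_iff)
qed



lemma sqrt_upper: "0 \<le> b \<Longrightarrow> x < b^2 \<Longrightarrow> sqrt x < b"
proof -
  assume "0 \<le> b" "x < b^2"
  then have "sqrt x < sqrt (b^2)" by (simp only: real_sqrt_less_iff)
  then show ?thesis using \<open>0 \<le> b\<close> by (metis real_sqrt_abs abs_of_nonneg)
qed

lemma inv_eqI: "(a::real) * b = 1 \<Longrightarrow> 1 / a = b"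
  by (metis div_by_1 mult_zero_left nonzero_mult_div_cancel_left zero_neq_one)

lemma rel: "(w::real fls) \<noteq> 0 \<Longrightarrow> y = a + b / w \<Longrightarrow> y * w = a * w + b"
  by (simp add: field_simps)

lemma period_map:
  assumes "\<forall>i. s (i + P) = s i"
  shows "map s [0..<P + m] = map s [0..<P] @ map s [0..<m]"
proof -
  have "[0..<P + m] = [0..<P] @ [P..<P + m]" using upt_add_eq_append[of 0 P m] by simp
  moreover have "[P..<P + m] = map (\<lambda>i. i + P) [0..<m]" using map_add_upt[of P m] by (simp add: add.commute)
  ultimately show ?thesis using assms by simp
qed

lemma cv_lemma:
  assumes "cf_terms x = t" "\<forall>i. t i \<ge> 1"
  shows "\<forall>n. qrat (convergent_cf x (Suc n)) = Vc t (Suc n)"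
proof
  fix n
  have "convergent_cf x (Suc n) = cf_val (map t [0..<Suc n])"
    unfolding convergent_cf_def assms(1) ..
  then show "qrat (convergent_cf x (Suc n)) = Vc t (Suc n)"
    unfolding Vc_def using qrat_eq[of "map t [0..<Suc n]"] assms(2) by simp
qed

lemma small_inv_le: "fls_nth g k \<noteq> 0 \<Longrightarrow> small (- k) (inverse g)"
proof -
  assume "fls_nth g k \<noteq> 0"
  then have "fls_subdegree g \<le> k" by (rule fls_subdegree_leI)
  then show ?thesis using small_inverse[of g] by (rule_tac small_mono) auto
qed

lemma small_sd: "fls_subdegree f = d \<Longrightarrow> small d f"
  using small_subdeg by metis

lemma qint4: "qint True 4 = 1 + fls_X + fls_X^2 + fls_X^3"
  by (simp add: qint_def eval_nat_numeral)

lemma qint4': "qint False 4 = 1 + fls_X_inv + fls_X_inv^2 + fls_X_inv^3"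
  by (simp add: qint_def eval_nat_numeral)

lemma qint2: "qint True 2 = 1 + fls_X" "qint False 2 = 1 + fls_X_inv"
  by (simp_all add: qint_def eval_nat_numeral)

lemma qint_Suc0[simp]: "qint b (Suc 0) = 1"
  by (simp add: qint_def)

lemma XXinv: "fls_X * fls_X_inv = (1::real fls)"
  by (metis fls_inverse_X fls_X_nonzero right_inverse)



lemma alg2:
  fixes q r w z1 u c0 c1 :: "'a::field"
  assumes qr: "q*r = 1" and nz: "w\<noteq>0"
    and R: "z1*w = (1+q)*w + q^2" "u*z1 = (1+r)*z1 + (r^2)" "c0*w = w + q" "c1*u = u + q"
  shows "(q^2*c0^2 - (q^3-1)*c0 - (q^2+1)) * (1+q) = -(c1-c0) * (q^2) * u * z1"
proof -
  define L where "L = (1+q)*w + q^2"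
  define M where "M = w + q"
  have D: "(c1 - c0) * u * w = (q) * (w - u)"
  proof -
    have "(c1 - c0) * u * w = (c1*u)*w - (c0*w)*u" by (simp add: algebra_simps)
    also have "\<dots> = (q) * (w - u)" unfolding R by (simp add: algebra_simps)
    finally show ?thesis .
  qed
  have e1: "z1*w = L" using R(1) unfolding L_def .
  have X: "(w - u) * z1 * w = w*L - (1+r)*L - (r^2)*w"
  proof -
    have "(w - u) * z1 * w = w*(z1*w) - (u*z1)*w" by (simp add: algebra_simps)
    also have "\<dots> = w*L - ((1+r)*z1 + (r^2))*w" unfolding e1 R(2) ..
    also have "\<dots> = w*L - (1+r)*(z1*w) - (r^2)*w" by (simp add: algebra_simps)
    also have "\<dots> = w*L - (1+r)*L - (r^2)*w" unfolding e1 ..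
    finally show ?thesis .
  qed
  have Y: "(q^2*c0^2 - (q^3-1)*c0 - (q^2+1)) * w^2 = q^2*M^2 - (q^3-1)*M*w - (q^2+1)*w^2"
  proof -
    have "(q^2*c0^2 - (q^3-1)*c0 - (q^2+1)) * w^2 = q^2*(c0*w)^2 - (q^3-1)*(c0*w)*w - (q^2+1)*w^2"
      by (simp add: algebra_simps power2_eq_square)
    then show ?thesis unfolding R M_def .
  qed
  have P: "(1+q) * (q^2*M^2 - (q^3-1)*M*w - (q^2+1)*w^2) = - ((q^2) * (q)) * (w*L - (1+r)*L - (r^2)*w)"
    unfolding L_def M_def using qr by algebra
  have "(q^2*c0^2 - (q^3-1)*c0 - (q^2+1)) * (1+q) * w^2 = (1+q) * ((q^2*c0^2 - (q^3-1)*c0 - (q^2+1)) * w^2)"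
    by (simp only: ac_simps)
  also have "\<dots> = (1+q) * (q^2*M^2 - (q^3-1)*M*w - (q^2+1)*w^2)" unfolding Y ..
  also have "\<dots> = - ((q^2) * (q)) * (w*L - (1+r)*L - (r^2)*w)" unfolding P ..
  also have "\<dots> = - ((q^2) * (q)) * ((w - u) * z1 * w)" unfolding X ..
  also have "\<dots> = - (q^2) * ((q) * (w - u)) * z1 * w" by (simp add: algebra_simps)
  also have "\<dots> = - (q^2) * ((c1 - c0) * u * w) * z1 * w" unfolding D ..
  finally have "(q^2*c0^2 - (q^3-1)*c0 - (q^2+1)) * (1+q) * w^2 = (-(c1-c0) * (q^2) * u * z1) * w^2"
    by (simp add: algebra_simps power2_eq_square)
  then show ?thesis using nz by simp
qed
lemma alg3:
  fixes q r w z1 u c0 c1 :: "'a::field"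
  assumes qr: "q*r = 1" and nz: "w\<noteq>0"
    and R: "z1*w = (1+q)*w + q^2" "u*z1 = (1)*z1 + (r)" "c0*w = w + q" "c1*u = u + q"
  shows "(q^2*c0^2 - (q^3+q^2-q-1)*c0 - (q^2+q+1)) * (q) = -(c1-c0) * (q^2) * u * z1"
proof -
  define L where "L = (1+q)*w + q^2"
  define M where "M = w + q"
  have D: "(c1 - c0) * u * w = (q) * (w - u)"
  proof -
    have "(c1 - c0) * u * w = (c1*u)*w - (c0*w)*u" by (simp add: algebra_simps)
    also have "\<dots> = (q) * (w - u)" unfolding R by (simp add: algebra_simps)
    finally show ?thesis .
  qed
  have e1: "z1*w = L" using R(1) unfolding L_def .
  have X: "(w - u) * z1 * w = w*L - (1)*L - (r)*w"
  proof -
    have "(w - u) * z1 * w = w*(z1*w) - (u*z1)*w" by (simp add: algebra_simps)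
    also have "\<dots> = w*L - ((1)*z1 + (r))*w" unfolding e1 R(2) ..
    also have "\<dots> = w*L - (1)*(z1*w) - (r)*w" by (simp add: algebra_simps)
    also have "\<dots> = w*L - (1)*L - (r)*w" unfolding e1 ..
    finally show ?thesis .
  qed
  have Y: "(q^2*c0^2 - (q^3+q^2-q-1)*c0 - (q^2+q+1)) * w^2 = q^2*M^2 - (q^3+q^2-q-1)*M*w - (q^2+q+1)*w^2"
  proof -
    have "(q^2*c0^2 - (q^3+q^2-q-1)*c0 - (q^2+q+1)) * w^2 = q^2*(c0*w)^2 - (q^3+q^2-q-1)*(c0*w)*w - (q^2+q+1)*w^2"
      by (simp add: algebra_simps power2_eq_square)
    then show ?thesis unfolding R M_def .
  qed
  have P: "(q) * (q^2*M^2 - (q^3+q^2-q-1)*M*w - (q^2+q+1)*w^2) = - ((q^2) * (q)) * (w*L - (1)*L - (r)*w)"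
    unfolding L_def M_def using qr by algebra
  have "(q^2*c0^2 - (q^3+q^2-q-1)*c0 - (q^2+q+1)) * (q) * w^2 = (q) * ((q^2*c0^2 - (q^3+q^2-q-1)*c0 - (q^2+q+1)) * w^2)"
    by (simp only: ac_simps)
  also have "\<dots> = (q) * (q^2*M^2 - (q^3+q^2-q-1)*M*w - (q^2+q+1)*w^2)" unfolding Y ..
  also have "\<dots> = - ((q^2) * (q)) * (w*L - (1)*L - (r)*w)" unfolding P ..
  also have "\<dots> = - ((q^2) * (q)) * ((w - u) * z1 * w)" unfolding X ..
  also have "\<dots> = - (q^2) * ((q) * (w - u)) * z1 * w" by (simp add: algebra_simps)
  also have "\<dots> = - (q^2) * ((c1 - c0) * u * w) * z1 * w" unfolding D ..
  finally have "(q^2*c0^2 - (q^3+q^2-q-1)*c0 - (q^2+q+1)) * (q) * w^2 = (-(c1-c0) * (q^2) * u * z1) * w^2"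
    by (simp add: algebra_simps power2_eq_square)
  then show ?thesis using nz by simp
qed
lemma alg5:
  fixes q r w z1 u c0 c1 :: "'a::field"
  assumes qr: "q*r = 1" and nz: "w\<noteq>0"
    and R: "z1*w = (1+q+q^2+q^3)*w + q^4" "u*z1 = (1+r+r^2+r^3)*z1 + (r^4)" "c0*w = (1+q)*w + q^2" "c1*u = (1+q)*u + q^2"
  shows "(q^3*c0^2 - (q^5+q^3-q^2-1)*c0 - (q^4+q^3+q^2+q+1)) * (q^2+q+1+r) = -(c1-c0) * (q^3) * u * z1"
proof -
  define L where "L = (1+q+q^2+q^3)*w + q^4"
  define M where "M = (1+q)*w + q^2"
  have D: "(c1 - c0) * u * w = (q^2) * (w - u)"
  proof -
    have "(c1 - c0) * u * w = (c1*u)*w - (c0*w)*u" by (simp add: algebra_simps)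
    also have "\<dots> = (q^2) * (w - u)" unfolding R by (simp add: algebra_simps)
    finally show ?thesis .
  qed
  have e1: "z1*w = L" using R(1) unfolding L_def .
  have X: "(w - u) * z1 * w = w*L - (1+r+r^2+r^3)*L - (r^4)*w"
  proof -
    have "(w - u) * z1 * w = w*(z1*w) - (u*z1)*w" by (simp add: algebra_simps)
    also have "\<dots> = w*L - ((1+r+r^2+r^3)*z1 + (r^4))*w" unfolding e1 R(2) ..
    also have "\<dots> = w*L - (1+r+r^2+r^3)*(z1*w) - (r^4)*w" by (simp add: algebra_simps)
    also have "\<dots> = w*L - (1+r+r^2+r^3)*L - (r^4)*w" unfolding e1 ..
    finally show ?thesis .
  qed
  have Y: "(q^3*c0^2 - (q^5+q^3-q^2-1)*c0 - (q^4+q^3+q^2+q+1)) * w^2 = q^3*M^2 - (q^5+q^3-q^2-1)*M*w - (q^4+q^3+q^2+q+1)*w^2"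
  proof -
    have "(q^3*c0^2 - (q^5+q^3-q^2-1)*c0 - (q^4+q^3+q^2+q+1)) * w^2 = q^3*(c0*w)^2 - (q^5+q^3-q^2-1)*(c0*w)*w - (q^4+q^3+q^2+q+1)*w^2"
      by (simp add: algebra_simps power2_eq_square)
    then show ?thesis unfolding R M_def .
  qed
  have P: "(q^2+q+1+r) * (q^3*M^2 - (q^5+q^3-q^2-1)*M*w - (q^4+q^3+q^2+q+1)*w^2) = - ((q^3) * (q^2)) * (w*L - (1+r+r^2+r^3)*L - (r^4)*w)"
    unfolding L_def M_def using qr by algebra
  have "(q^3*c0^2 - (q^5+q^3-q^2-1)*c0 - (q^4+q^3+q^2+q+1)) * (q^2+q+1+r) * w^2 = (q^2+q+1+r) * ((q^3*c0^2 - (q^5+q^3-q^2-1)*c0 - (q^4+q^3+q^2+q+1)) * w^2)"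
    by (simp only: ac_simps)
  also have "\<dots> = (q^2+q+1+r) * (q^3*M^2 - (q^5+q^3-q^2-1)*M*w - (q^4+q^3+q^2+q+1)*w^2)" unfolding Y ..
  also have "\<dots> = - ((q^3) * (q^2)) * (w*L - (1+r+r^2+r^3)*L - (r^4)*w)" unfolding P ..
  also have "\<dots> = - ((q^3) * (q^2)) * ((w - u) * z1 * w)" unfolding X ..
  also have "\<dots> = - (q^3) * ((q^2) * (w - u)) * z1 * w" by (simp add: algebra_simps)
  also have "\<dots> = - (q^3) * ((c1 - c0) * u * w) * z1 * w" unfolding D ..
  finally have "(q^3*c0^2 - (q^5+q^3-q^2-1)*c0 - (q^4+q^3+q^2+q+1)) * (q^2+q+1+r) * w^2 = (-(c1-c0) * (q^3) * u * z1) * w^2"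
    by (simp add: algebra_simps power2_eq_square)
  then show ?thesis using nz by simp
qed

lemma alg7:
  fixes q r w z1 z2 z3 u c0 c1 :: "'a::field"
  assumes qr: "q*r = 1" and nz: "w\<noteq>0"
    and R: "z3*w = (1 + q + q^2 + q^3)*w + q^4" "z2*z3 = z3 + r" "z1*z2 = z2 + q" "u*z1 = z1 + r"
     "c0*w = (1 + q)*w + q^2" "c1*u = (1 + q)*u + q^2"
  shows "(q^3*c0^2 - (q^5+q^4-q-1)*c0 - (q^4+2*q^3+q^2+2*q+1)) * (q+q^2+q^3) = -(c1-c0) * q^3 * u * z1 * z2 * z3"
proof -
  define L where "L = (1 + q + q^2 + q^3)*w + q^4"
  define M where "M = (1 + q)*w + q^2"
  have D: "(c1 - c0) * u * w = q^2 * (w - u)"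
  proof -
    have "(c1 - c0) * u * w = (c1*u)*w - (c0*w)*u" by (simp add: algebra_simps)
    also have "\<dots> = q^2 * (w - u)" unfolding R by (simp add: algebra_simps)
    finally show ?thesis .
  qed
  have e1: "z3*w = L" using R(1) unfolding L_def .
  have z2L: "z2*L = L + r*w"
  proof -
    have "z2*L = (z2*z3)*w" unfolding e1[symmetric] by (simp add: algebra_simps)
    also have "\<dots> = z3*w + r*w" unfolding R(2) by (simp add: algebra_simps)
    finally show ?thesis unfolding e1 .
  qed
  have X: "(w - u) * z1 * z2 * z3 * w = (L + r*w)*(w-1-r) + q*(w-1)*L"
  proof -
    have "(w - u) * z1 * z2 * z3 * w = w*z1*z2*(z3*w) - (u*z1)*z2*(z3*w)" by (simp add: algebra_simps)
    also have "\<dots> = w*z1*z2*L - (z1 + r)*z2*L" unfolding e1 R(4) ..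
    also have "\<dots> = (w-1)*(z1*z2)*L - r*(z2*L)" by (simp add: algebra_simps)
    also have "\<dots> = (w-1)*(z2+q)*L - r*(z2*L)" unfolding R(3) ..
    also have "\<dots> = (z2*L)*(w-1-r) + q*(w-1)*L" by (simp add: algebra_simps)
    also have "\<dots> = (L + r*w)*(w-1-r) + q*(w-1)*L" unfolding z2L ..
    finally show ?thesis .
  qed
  have Y: "(q^3*c0^2 - (q^5+q^4-q-1)*c0 - (q^4+2*q^3+q^2+2*q+1)) * w^2
      = q^3*M^2 - (q^5+q^4-q-1)*M*w - (q^4+2*q^3+q^2+2*q+1)*w^2"
  proof -
    have "(q^3*c0^2 - (q^5+q^4-q-1)*c0 - (q^4+2*q^3+q^2+2*q+1)) * w^2
      = q^3*(c0*w)^2 - (q^5+q^4-q-1)*(c0*w)*w - (q^4+2*q^3+q^2+2*q+1)*w^2"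
      by (simp add: algebra_simps power2_eq_square)
    then show ?thesis unfolding R M_def .
  qed
  have P: "(q+q^2+q^3) * (q^3*M^2 - (q^5+q^4-q-1)*M*w - (q^4+2*q^3+q^2+2*q+1)*w^2)
     = - (q^3 * q^2) * ((L + r*w)*(w-1-r) + q*(w-1)*L)"
    unfolding L_def M_def using qr by algebra
  have "(q^3*c0^2 - (q^5+q^4-q-1)*c0 - (q^4+2*q^3+q^2+2*q+1)) * (q+q^2+q^3) * w^2
      = (q+q^2+q^3) * ((q^3*c0^2 - (q^5+q^4-q-1)*c0 - (q^4+2*q^3+q^2+2*q+1)) * w^2)"
    by (simp only: ac_simps)
  also have "\<dots> = (q+q^2+q^3) * (q^3*M^2 - (q^5+q^4-q-1)*M*w - (q^4+2*q^3+q^2+2*q+1)*w^2)"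
    unfolding Y ..
  also have "\<dots> = - (q^3 * q^2) * ((L + r*w)*(w-1-r) + q*(w-1)*L)" unfolding P ..
  also have "\<dots> = - (q^3 * q^2) * ((w - u) * z1 * z2 * z3 * w)" unfolding X ..
  also have "\<dots> = - (q^3) * ((c1 - c0) * u * w) * z1 * z2 * z3 * w" unfolding D by (simp add: algebra_simps)
  finally have "(q^3*c0^2 - (q^5+q^4-q-1)*c0 - (q^4+2*q^3+q^2+2*q+1)) * (q+q^2+q^3) * w^2
      = (-(c1-c0) * q^3 * u * z1 * z2 * z3) * w^2" by (simp add: algebra_simps power2_eq_square)
  then show ?thesis using nz by simp
qed


lemma finish:
  fixes E g F :: "real fls"
  assumes "E * g = F" "small N F" "fls_nth g k \<noteq> 0"
  shows "small (N - k) E"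
proof -
  have gnz: "g \<noteq> 0" using assms(3) by auto
  have "small (N + - k) (F * inverse g)" by (intro small_mult small_inv_le assms)
  moreover have "F * inverse g = E" using gnz unfolding assms(1)[symmetric] by simp
  ultimately show ?thesis by simp
qed

lemma to_fls_X[simp]: "fps_to_fls (fps_X ^ k) = (fls_X ^ k :: real fls)"
  by (simp add: fps_to_fls_power)



lemmas qint4b = qint4'

definition t2 :: "nat \<Rightarrow> nat" where "t2 i = (if i = 0 then 1 else 2)"
definition t3 :: "nat \<Rightarrow> nat" where "t3 i = (if i = 0 then 1 else if odd i then 1 else 2)"
definition t5 :: "nat \<Rightarrow> nat" where "t5 i = (if i = 0 then 2 else 4)"

lemma t2_ge: "\<forall>i. t2 i \<ge> 1" by (simp add: t2_def)
lemma t3_ge: "\<forall>i. t3 i \<ge> 1" by (simp add: t3_def)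
lemma t5_ge: "\<forall>i. t5 i \<ge> 1" by (simp add: t5_def)

lemma s2: "14/10 < sqrt (2::real)" "sqrt (2::real) < 15/10"
  by (rule real_less_rsqrt, simp add: power2_eq_square) (rule sqrt_upper, simp_all add: power2_eq_square)
lemma s3: "17/10 < sqrt (3::real)" "sqrt (3::real) < 18/10"
  by (rule real_less_rsqrt, simp add: power2_eq_square) (rule sqrt_upper, simp_all add: power2_eq_square)
lemma s5: "22/10 < sqrt (5::real)" "sqrt (5::real) < 23/10"
  by (rule real_less_rsqrt, simp add: power2_eq_square) (rule sqrt_upper, simp_all add: power2_eq_square)

lemma fl2: "\<lfloor>sqrt (2::real)\<rfloor> = 1" "\<lfloor>sqrt 2 + 1\<rfloor> = (2::int)"
  by (rule floor_unique; use s2 in \<open>simp add: field_simps\<close>)+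
lemma fl3: "\<lfloor>sqrt (3::real)\<rfloor> = 1" "\<lfloor>(sqrt 3 + 1) / 2\<rfloor> = (1::int)" "\<lfloor>sqrt 3 + 1\<rfloor> = (2::int)"
  by (rule floor_unique; use s3 in \<open>simp add: field_simps\<close>)+
lemma fl5: "\<lfloor>sqrt (5::real)\<rfloor> = 2" "\<lfloor>sqrt 5 + 2\<rfloor> = (4::int)"
  by (rule floor_unique; use s5 in \<open>simp add: field_simps\<close>)+

lemma st2: "1 / (sqrt 2 - 1) = sqrt 2 + (1::real)" "1 / (sqrt 2 + 1 - 2) = sqrt 2 + (1::real)"
  by (rule inv_eqI, simp add: field_simps algebra_simps)+
lemma st3: "1 / (sqrt 3 - 1) = (sqrt 3 + 1) / (2::real)" "1 / ((sqrt 3 + 1) / 2 - 1) = sqrt 3 + (1::real)"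
  "1 / (sqrt 3 + 1 - 2) = (sqrt 3 + 1) / (2::real)"
  by (rule inv_eqI, simp add: field_simps algebra_simps)+
lemma st5: "1 / (sqrt 5 - 2) = sqrt 5 + (2::real)" "1 / (sqrt 5 + 2 - 4) = sqrt 5 + (2::real)"
  by (rule inv_eqI, simp add: field_simps algebra_simps)+

lemma rem2: "cf_rem (sqrt 2) (Suc n) = sqrt 2 + 1"
proof (induction n)
  case 0 then show ?case using st2(1) by (simp add: fl2)
next
  case (Suc n)
  have "cf_rem (sqrt 2) (Suc (Suc n)) = 1 / (cf_rem (sqrt 2) (Suc n) - of_int \<lfloor>cf_rem (sqrt 2) (Suc n)\<rfloor>)"
    by (rule cf_rem.simps(2))
  then show ?case unfolding Suc fl2 using st2(2) by simp
qed

lemma rem5: "cf_rem (sqrt 5) (Suc n) = sqrt 5 + 2"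
proof (induction n)
  case 0 then show ?case using st5(1) by (simp add: fl5)
next
  case (Suc n)
  have "cf_rem (sqrt 5) (Suc (Suc n)) = 1 / (cf_rem (sqrt 5) (Suc n) - of_int \<lfloor>cf_rem (sqrt 5) (Suc n)\<rfloor>)"
    by (rule cf_rem.simps(2))
  then show ?case unfolding Suc fl5 using st5(2) by simp
qed

lemma rem3: "cf_rem (sqrt 3) (Suc n) = (if even n then (sqrt 3 + 1) / 2 else sqrt 3 + 1)"
proof (induction n)
  case 0 then show ?case using st3(1) by (simp add: fl3)
next
  case (Suc n)
  have e: "cf_rem (sqrt 3) (Suc (Suc n)) = 1 / (cf_rem (sqrt 3) (Suc n) - of_int \<lfloor>cf_rem (sqrt 3) (Suc n)\<rfloor>)"
    by (rule cf_rem.simps(2))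
  show ?case
  proof (cases "even n")
    case True
    then show ?thesis unfolding e Suc using st3(2) by (simp add: fl3)
  next
    case False
    then show ?thesis unfolding e Suc using st3(3) by (simp add: fl3)
  qed
qed

lemma terms2: "cf_terms (sqrt 2) = t2"
proof
  fix i show "cf_terms (sqrt 2) i = t2 i"
    by (cases i) (simp_all only: cf_terms_def cf_rem.simps(1) rem2 fl2 t2_def, simp_all)
qed

lemma terms5: "cf_terms (sqrt 5) = t5"
proof
  fix i show "cf_terms (sqrt 5) i = t5 i"
    by (cases i) (simp_all only: cf_terms_def cf_rem.simps(1) rem5 fl5 t5_def, simp_all)
qed

lemma terms3: "cf_terms (sqrt 3) = t3"
proof
  fix i show "cf_terms (sqrt 3) i = t3 i"
  proof (cases i)
    case 0 then show ?thesis by (simp add: cf_terms_def fl3 t3_def)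
  next
    case (Suc n)
    then show ?thesis unfolding cf_terms_def Suc rem3 by (cases "even n") (simp_all add: fl3 t3_def)
  qed
qed

lemma ev2: "\<forall>n\<ge>2. small (int n - 2) (fls_X^2 * Vc t2 n ^ 2 - (fls_X^3-1) * Vc t2 n - (fls_X^2+1))"
proof (intro allI impI)
  fix n :: nat assume n: "n \<ge> 2"
  obtain m where nm: "n = Suc m" and m: "m \<ge> 1" using n by (cases n) auto
  define s where "s i = t2 (Suc i)" for i
  have per: "\<forall>i. s (i + 2) = s i" by (simp add: s_def t2_def)
  define r where "r = map s [0..<m]"
  have rne: "r \<noteq> []" using m by (simp add: r_def)
  have r1: "\<forall>x\<in>set r. x \<ge> 1" using t2_ge by (auto simp: r_def s_def)
  have uP: "[0..<2] = [0::nat..<2]" ..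
  have sP: "map s [0..<2] = [2, 2]" by (simp add: s_def t2_def numeral_eq_Suc upt_Suc)
  have V0: "Vc t2 n = qcf True (1 # r)" unfolding Vc_def nm map_upt_Suc r_def s_def by (simp add: t2_def)
  have V1: "Vc t2 (n + 2) = qcf True (1 # 2 # 2 # r)"
  proof -
    have e: "n + 2 = Suc (2 + m)" using nm by simp
    have "map t2 [0..<n + 2] = t2 0 # map s [0..<2 + m]" unfolding e s_def by (simp only: map_upt_Suc)
    also have "\<dots> = 1 # [2, 2] @ r" unfolding period_map[OF per] sP r_def by (simp add: t2_def)
    finally show ?thesis unfolding Vc_def by simp
  qed
  define w where "w = qcf False r"
  define u where "u = qcf False (2 # 2 # r)"
  define z1 where "z1 = qcf True (2 # r)"
  define c0 where "c0 = Vc t2 n"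
  define c1 where "c1 = Vc t2 (n + 2)"
  have wnz: "w \<noteq> 0" using qcf_props[OF rne r1] by (simp add: w_def)
  have r_u: "\<forall>x\<in>set (2 # 2 # r). x \<ge> 1" using r1 by auto
  have r_z1: "\<forall>x\<in>set (2 # r). x \<ge> 1" using r1 by auto
  have up: "u \<noteq> 0" "fls_subdegree u = -2" using qcf_False_long[OF _ r_u] unfolding u_def by auto
  have z1p: "z1 \<noteq> 0" "fls_subdegree z1 = 0" using qcf_props[OF _ r_z1] unfolding z1_def by blast+
  have R1: "z1*w = (1 + fls_X)*w + fls_X^2"
    using rel[OF wnz, of z1 "qint True 2" "qpow True 2"] rne unfolding z1_def w_def V0 V1
    by (simp add: qcf_Cons qint2 qint4 qint4b qpow_def qint_one)
  have R2: "u*z1 = (1 + fls_X_inv)*z1 + fls_X_inv^2"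
    using rel[OF z1p(1), of u "qint False 2" "qpow False 2"] rne unfolding u_def z1_def V0 V1
    by (simp add: qcf_Cons qint2 qint4 qint4b qpow_def qint_one)
  have R3: "c0*w = w + fls_X"
    using rel[OF wnz, of c0 "qint True 1" "qpow True 1"] rne unfolding c0_def w_def V0 V1
    by (simp add: qcf_Cons qint2 qint4 qint4b qpow_def qint_one)
  have R4: "c1*u = u + fls_X"
    using rel[OF up(1), of c1 "qint True 1" "qpow True 1"] rne unfolding c1_def u_def V0 V1
    by (simp add: qcf_Cons qint2 qint4 qint4b qpow_def qint_one)
  have Eq: "(fls_X^2*c0^2 - (fls_X^3-1)*c0 - (fls_X^2+1)) * (1+fls_X) = -(c1-c0) * fls_X^2 * u * z1"
    by (rule alg2[OF XXinv wnz R1 R2 R3 R4])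
  have D: "small (int n - 2) (c1 - c0)" unfolding c0_def c1_def using far[OF t2_ge, of n "n+2"] n by simp
  have "small (int n - 2 + 2 + -2 + 0) (-(c1-c0) * fls_X^2 * u * z1)"
    by (intro small_mult small_uminus D small_sd) (simp_all add: up z1p)
  then have "small (int n - 2 + 2 + -2 + 0 - (0)) (fls_X^2*c0^2 - (fls_X^3-1)*c0 - (fls_X^2+1))"
    by (rule finish[OF Eq]) simp
  then show "small (int n - 2) (fls_X^2 * Vc t2 n ^ 2 - (fls_X^3-1) * Vc t2 n - (fls_X^2+1))" by (simp add: c0_def)
qed

lemma main2: "fps_X ^ 2 * qreal (sqrt 2) ^ 2 - (fps_X ^ 3 - 1) * qreal (sqrt 2) = fps_X ^ 2 + 1"
proof -
  have "(fps_X ^ 2) * qreal (sqrt 2) ^ 2 + (- (fps_X ^ 3 - 1)) * qreal (sqrt 2) + (- (fps_X ^ 2 + 1)) = 0"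
  proof (rule assemble[OF t2_ge cv_lemma[OF terms2 t2_ge]], intro allI impI)
    fix n :: nat assume "2 \<le> n"
    then have h: "small (int n - 2) (fls_X^2 * Vc t2 n ^ 2 - (fls_X^3-1) * Vc t2 n - (fls_X^2+1))" using ev2 by blast
    have e: "fps_to_fls (fps_X ^ 2) * Vc t2 n ^ 2 + fps_to_fls (- (fps_X ^ 3 - 1)) * Vc t2 n + fps_to_fls (- (fps_X ^ 2 + 1)) =
       fls_X^2 * Vc t2 n ^ 2 - (fls_X^3-1) * Vc t2 n - (fls_X^2+1)"
      by (simp add: fls_times_fps_to_fls algebra_simps)
    show "small (int n - 2) (fps_to_fls (fps_X ^ 2) * Vc t2 n ^ 2 + fps_to_fls (- (fps_X ^ 3 - 1)) * Vc t2 n + fps_to_fls (- (fps_X ^ 2 + 1)))"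
      unfolding e by (rule h)
  qed
  then show ?thesis by (simp add: algebra_simps eq_neg_iff_add_eq_0)
qed

lemma ev3: "\<forall>n\<ge>2. small (int n - 2) (fls_X^2 * Vc t3 n ^ 2 - (fls_X^3+fls_X^2-fls_X-1) * Vc t3 n - (fls_X^2+fls_X+1))"
proof (intro allI impI)
  fix n :: nat assume n: "n \<ge> 2"
  obtain m where nm: "n = Suc m" and m: "m \<ge> 1" using n by (cases n) auto
  define s where "s i = t3 (Suc i)" for i
  have per: "\<forall>i. s (i + 2) = s i" by (simp add: s_def t3_def)
  define r where "r = map s [0..<m]"
  have rne: "r \<noteq> []" using m by (simp add: r_def)
  have r1: "\<forall>x\<in>set r. x \<ge> 1" using t3_ge by (auto simp: r_def s_def)
  have uP: "[0..<2] = [0::nat..<2]" ..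
  have sP: "map s [0..<2] = [1, 2]" by (simp add: s_def t3_def numeral_eq_Suc upt_Suc)
  have V0: "Vc t3 n = qcf True (1 # r)" unfolding Vc_def nm map_upt_Suc r_def s_def by (simp add: t3_def)
  have V1: "Vc t3 (n + 2) = qcf True (1 # 1 # 2 # r)"
  proof -
    have e: "n + 2 = Suc (2 + m)" using nm by simp
    have "map t3 [0..<n + 2] = t3 0 # map s [0..<2 + m]" unfolding e s_def by (simp only: map_upt_Suc)
    also have "\<dots> = 1 # [1, 2] @ r" unfolding period_map[OF per] sP r_def by (simp add: t3_def)
    finally show ?thesis unfolding Vc_def by simp
  qed
  define w where "w = qcf False r"
  define u where "u = qcf False (1 # 2 # r)"
  define z1 where "z1 = qcf True (2 # r)"
  define c0 where "c0 = Vc t3 n"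
  define c1 where "c1 = Vc t3 (n + 2)"
  have wnz: "w \<noteq> 0" using qcf_props[OF rne r1] by (simp add: w_def)
  have r_u: "\<forall>x\<in>set (1 # 2 # r). x \<ge> 1" using r1 by auto
  have r_z1: "\<forall>x\<in>set (2 # r). x \<ge> 1" using r1 by auto
  have up: "u \<noteq> 0" "fls_subdegree u = -1" using qcf_False_long[OF _ r_u] unfolding u_def by auto
  have z1p: "z1 \<noteq> 0" "fls_subdegree z1 = 0" using qcf_props[OF _ r_z1] unfolding z1_def by blast+
  have R1: "z1*w = (1 + fls_X)*w + fls_X^2"
    using rel[OF wnz, of z1 "qint True 2" "qpow True 2"] rne unfolding z1_def w_def V0 V1
    by (simp add: qcf_Cons qint2 qint4 qint4b qpow_def qint_one)
  have R2: "u*z1 = 1*z1 + fls_X_inv"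
    using rel[OF z1p(1), of u "qint False 1" "qpow False 1"] rne unfolding u_def z1_def V0 V1
    by (simp add: qcf_Cons qint2 qint4 qint4b qpow_def qint_one)
  have R3: "c0*w = w + fls_X"
    using rel[OF wnz, of c0 "qint True 1" "qpow True 1"] rne unfolding c0_def w_def V0 V1
    by (simp add: qcf_Cons qint2 qint4 qint4b qpow_def qint_one)
  have R4: "c1*u = u + fls_X"
    using rel[OF up(1), of c1 "qint True 1" "qpow True 1"] rne unfolding c1_def u_def V0 V1
    by (simp add: qcf_Cons qint2 qint4 qint4b qpow_def qint_one)
  have Eq: "(fls_X^2*c0^2 - (fls_X^3+fls_X^2-fls_X-1)*c0 - (fls_X^2+fls_X+1)) * (fls_X) = -(c1-c0) * fls_X^2 * u * z1"
    by (rule alg3[OF XXinv wnz R1 R2 R3 R4])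
  have D: "small (int n - 2) (c1 - c0)" unfolding c0_def c1_def using far[OF t3_ge, of n "n+2"] n by simp
  have "small (int n - 2 + 2 + -1 + 0) (-(c1-c0) * fls_X^2 * u * z1)"
    by (intro small_mult small_uminus D small_sd) (simp_all add: up z1p)
  then have "small (int n - 2 + 2 + -1 + 0 - (1)) (fls_X^2*c0^2 - (fls_X^3+fls_X^2-fls_X-1)*c0 - (fls_X^2+fls_X+1))"
    by (rule finish[OF Eq]) simp
  then show "small (int n - 2) (fls_X^2 * Vc t3 n ^ 2 - (fls_X^3+fls_X^2-fls_X-1) * Vc t3 n - (fls_X^2+fls_X+1))" by (simp add: c0_def)
qed

lemma main3: "fps_X ^ 2 * qreal (sqrt 3) ^ 2 - (fps_X ^ 3 + fps_X ^ 2 - fps_X - 1) * qreal (sqrt 3) = fps_X ^ 2 + fps_X + 1"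
proof -
  have "(fps_X ^ 2) * qreal (sqrt 3) ^ 2 + (- (fps_X ^ 3 + fps_X ^ 2 - fps_X - 1)) * qreal (sqrt 3) + (- (fps_X ^ 2 + fps_X + 1)) = 0"
  proof (rule assemble[OF t3_ge cv_lemma[OF terms3 t3_ge]], intro allI impI)
    fix n :: nat assume "2 \<le> n"
    then have h: "small (int n - 2) (fls_X^2 * Vc t3 n ^ 2 - (fls_X^3+fls_X^2-fls_X-1) * Vc t3 n - (fls_X^2+fls_X+1))" using ev3 by blast
    have e: "fps_to_fls (fps_X ^ 2) * Vc t3 n ^ 2 + fps_to_fls (- (fps_X ^ 3 + fps_X ^ 2 - fps_X - 1)) * Vc t3 n + fps_to_fls (- (fps_X ^ 2 + fps_X + 1)) =
       fls_X^2 * Vc t3 n ^ 2 - (fls_X^3+fls_X^2-fls_X-1) * Vc t3 n - (fls_X^2+fls_X+1)"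
      by (simp add: fls_times_fps_to_fls algebra_simps)
    show "small (int n - 2) (fps_to_fls (fps_X ^ 2) * Vc t3 n ^ 2 + fps_to_fls (- (fps_X ^ 3 + fps_X ^ 2 - fps_X - 1)) * Vc t3 n + fps_to_fls (- (fps_X ^ 2 + fps_X + 1)))"
      unfolding e by (rule h)
  qed
  then show ?thesis by (simp add: algebra_simps eq_neg_iff_add_eq_0)
qed

lemma ev5: "\<forall>n\<ge>2. small (int n - 2) (fls_X^3 * Vc t5 n ^ 2 - (fls_X^5+fls_X^3-fls_X^2-1) * Vc t5 n - (fls_X^4+fls_X^3+fls_X^2+fls_X+1))"
proof (intro allI impI)
  fix n :: nat assume n: "n \<ge> 2"
  obtain m where nm: "n = Suc m" and m: "m \<ge> 1" using n by (cases n) auto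
  define s where "s i = t5 (Suc i)" for i
  have per: "\<forall>i. s (i + 2) = s i" by (simp add: s_def t5_def)
  define r where "r = map s [0..<m]"
  have rne: "r \<noteq> []" using m by (simp add: r_def)
  have r1: "\<forall>x\<in>set r. x \<ge> 1" using t5_ge by (auto simp: r_def s_def)
  have uP: "[0..<2] = [0::nat..<2]" ..
  have sP: "map s [0..<2] = [4, 4]" by (simp add: s_def t5_def numeral_eq_Suc upt_Suc)
  have V0: "Vc t5 n = qcf True (2 # r)" unfolding Vc_def nm map_upt_Suc r_def s_def by (simp add: t5_def)
  have V1: "Vc t5 (n + 2) = qcf True (2 # 4 # 4 # r)"
  proof -
    have e: "n + 2 = Suc (2 + m)" using nm by simp
    have "map t5 [0..<n + 2] = t5 0 # map s [0..<2 + m]" unfolding e s_def by (simp only: map_upt_Suc)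
    also have "\<dots> = 2 # [4, 4] @ r" unfolding period_map[OF per] sP r_def by (simp add: t5_def)
    finally show ?thesis unfolding Vc_def by simp
  qed
  define w where "w = qcf False r"
  define u where "u = qcf False (4 # 4 # r)"
  define z1 where "z1 = qcf True (4 # r)"
  define c0 where "c0 = Vc t5 n"
  define c1 where "c1 = Vc t5 (n + 2)"
  have wnz: "w \<noteq> 0" using qcf_props[OF rne r1] by (simp add: w_def)
  have r_u: "\<forall>x\<in>set (4 # 4 # r). x \<ge> 1" using r1 by auto
  have r_z1: "\<forall>x\<in>set (4 # r). x \<ge> 1" using r1 by auto
  have up: "u \<noteq> 0" "fls_subdegree u = -4" using qcf_False_long[OF _ r_u] unfolding u_def by auto
  have z1p: "z1 \<noteq> 0" "fls_subdegree z1 = 0" using qcf_props[OF _ r_z1] unfolding z1_def by blast+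
  have R1: "z1*w = (1 + fls_X + fls_X^2 + fls_X^3)*w + fls_X^4"
    using rel[OF wnz, of z1 "qint True 4" "qpow True 4"] rne unfolding z1_def w_def V0 V1
    by (simp add: qcf_Cons qint2 qint4 qint4b qpow_def qint_one)
  have R2: "u*z1 = (1 + fls_X_inv + fls_X_inv^2 + fls_X_inv^3)*z1 + fls_X_inv^4"
    using rel[OF z1p(1), of u "qint False 4" "qpow False 4"] rne unfolding u_def z1_def V0 V1
    by (simp add: qcf_Cons qint2 qint4 qint4b qpow_def qint_one)
  have R3: "c0*w = (1 + fls_X)*w + fls_X^2"
    using rel[OF wnz, of c0 "qint True 2" "qpow True 2"] rne unfolding c0_def w_def V0 V1
    by (simp add: qcf_Cons qint2 qint4 qint4b qpow_def qint_one)
  have R4: "c1*u = (1 + fls_X)*u + fls_X^2"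
    using rel[OF up(1), of c1 "qint True 2" "qpow True 2"] rne unfolding c1_def u_def V0 V1
    by (simp add: qcf_Cons qint2 qint4 qint4b qpow_def qint_one)
  have Eq: "(fls_X^3*c0^2 - (fls_X^5+fls_X^3-fls_X^2-1)*c0 - (fls_X^4+fls_X^3+fls_X^2+fls_X+1)) * (fls_X^2+fls_X+1+fls_X_inv) = -(c1-c0) * fls_X^3 * u * z1"
    by (rule alg5[OF XXinv wnz R1 R2 R3 R4])
  have D: "small (int n - 2) (c1 - c0)" unfolding c0_def c1_def using far[OF t5_ge, of n "n+2"] n by simp
  have "small (int n - 2 + 3 + -4 + 0) (-(c1-c0) * fls_X^3 * u * z1)"
    by (intro small_mult small_uminus D small_sd) (simp_all add: up z1p)
  then have "small (int n - 2 + 3 + -4 + 0 - (-1)) (fls_X^3*c0^2 - (fls_X^5+fls_X^3-fls_X^2-1)*c0 - (fls_X^4+fls_X^3+fls_X^2+fls_X+1))"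
    by (rule finish[OF Eq]) simp
  then show "small (int n - 2) (fls_X^3 * Vc t5 n ^ 2 - (fls_X^5+fls_X^3-fls_X^2-1) * Vc t5 n - (fls_X^4+fls_X^3+fls_X^2+fls_X+1))" by (simp add: c0_def)
qed

lemma main5: "fps_X ^ 3 * qreal (sqrt 5) ^ 2 - (fps_X ^ 5 + fps_X ^ 3 - fps_X ^ 2 - 1) * qreal (sqrt 5) = fps_X ^ 4 + fps_X ^ 3 + fps_X ^ 2 + fps_X + 1"
proof -
  have "(fps_X ^ 3) * qreal (sqrt 5) ^ 2 + (- (fps_X ^ 5 + fps_X ^ 3 - fps_X ^ 2 - 1)) * qreal (sqrt 5) + (- (fps_X ^ 4 + fps_X ^ 3 + fps_X ^ 2 + fps_X + 1)) = 0"
  proof (rule assemble[OF t5_ge cv_lemma[OF terms5 t5_ge]], intro allI impI)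
    fix n :: nat assume "2 \<le> n"
    then have h: "small (int n - 2) (fls_X^3 * Vc t5 n ^ 2 - (fls_X^5+fls_X^3-fls_X^2-1) * Vc t5 n - (fls_X^4+fls_X^3+fls_X^2+fls_X+1))" using ev5 by blast
    have e: "fps_to_fls (fps_X ^ 3) * Vc t5 n ^ 2 + fps_to_fls (- (fps_X ^ 5 + fps_X ^ 3 - fps_X ^ 2 - 1)) * Vc t5 n + fps_to_fls (- (fps_X ^ 4 + fps_X ^ 3 + fps_X ^ 2 + fps_X + 1)) =
       fls_X^3 * Vc t5 n ^ 2 - (fls_X^5+fls_X^3-fls_X^2-1) * Vc t5 n - (fls_X^4+fls_X^3+fls_X^2+fls_X+1)"
      by (simp add: fls_times_fps_to_fls algebra_simps)
    show "small (int n - 2) (fps_to_fls (fps_X ^ 3) * Vc t5 n ^ 2 + fps_to_fls (- (fps_X ^ 5 + fps_X ^ 3 - fps_X ^ 2 - 1)) * Vc t5 n + fps_to_fls (- (fps_X ^ 4 + fps_X ^ 3 + fps_X ^ 2 + fps_X + 1)))"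
      unfolding e by (rule h)
  qed
  then show ?thesis by (simp add: algebra_simps eq_neg_iff_add_eq_0)
qed



definition g7 :: "nat \<Rightarrow> real" where
  "g7 k = (if k = 0 then (sqrt 7 + 2) / 3 else if k = 1 then (sqrt 7 + 1) / 2
     else if k = 2 then (sqrt 7 + 1) / 3 else sqrt 7 + 2)"
definition tv7 :: "nat \<Rightarrow> nat" where "tv7 k = (if k = 3 then 4 else 1)"
definition t7 :: "nat \<Rightarrow> nat" where "t7 i = (if i = 0 then 2 else tv7 ((i - 1) mod 4))"

lemma s7: "26/10 < sqrt (7::real)" "sqrt (7::real) < 27/10"
  by (rule real_less_rsqrt, simp add: power2_eq_square) (rule sqrt_upper, simp_all add: power2_eq_square)
lemma s7': "sqrt (7::real) * sqrt 7 = 7" by simp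
lemma k4: "k < 4 \<Longrightarrow> k = 0 \<or> k = 1 \<or> k = 2 \<or> k = (3::nat)" by arith
lemma fl7: "\<lfloor>(sqrt 7 + 2) / 3\<rfloor> = (1::int)" "\<lfloor>(sqrt 7 + 1) / 2\<rfloor> = (1::int)"
  "\<lfloor>(sqrt 7 + 1) / 3\<rfloor> = (1::int)" "\<lfloor>sqrt 7 + 2\<rfloor> = (4::int)" "\<lfloor>sqrt (7::real)\<rfloor> = 2"
  by (rule floor_unique; use s7 in \<open>simp add: field_simps\<close>)+

lemma g7_floor: "k < 4 \<Longrightarrow> \<lfloor>g7 k\<rfloor> = int (tv7 k)"
  using k4[of k] fl7 by (auto simp: g7_def tv7_def)

lemma st7: "((sqrt 7 + 2) / 3 - 1) * ((sqrt 7 + 1) / 2) = (1::real)"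
  "((sqrt 7 + 1) / 2 - 1) * ((sqrt 7 + 1) / 3) = (1::real)"
  "((sqrt 7 + 1) / 3 - 1) * (sqrt 7 + 2) = (1::real)"
  "(sqrt 7 + 2 - 4) * ((sqrt 7 + 2) / 3) = (1::real)"
  "(sqrt 7 - 2) * ((sqrt 7 + 2) / 3) = (1::real)"
  by (simp_all add: field_simps algebra_simps)

lemma g7_step: "k < 4 \<Longrightarrow> 1 / (g7 k - of_int \<lfloor>g7 k\<rfloor>) = g7 (Suc k mod 4)"
proof -
  assume k: "k < 4"
  have "(g7 k - of_int \<lfloor>g7 k\<rfloor>) * g7 (Suc k mod 4) = 1"
    unfolding g7_floor[OF k] using k4[OF k] st7 by (auto simp: g7_def tv7_def)
  then show ?thesis by (rule inv_eqI)
qed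

lemma rem7: "cf_rem (sqrt 7) (Suc n) = g7 (n mod 4)"
proof (induction n)
  case 0
  have f: "\<lfloor>sqrt (7::real)\<rfloor> = 2" by (rule fl7)
  have "(sqrt 7 - 2) * ((sqrt 7 + 2) / 3) = (1::real)" by (rule st7)
  then have "1 / (sqrt 7 - 2) = (sqrt 7 + 2) / (3::real)" by (rule inv_eqI)
  then show ?case by (simp add: f g7_def)
next
  case (Suc n)
  have "cf_rem (sqrt 7) (Suc (Suc n)) = 1 / (g7 (n mod 4) - of_int \<lfloor>g7 (n mod 4)\<rfloor>)"
    using Suc by simp
  also have "\<dots> = g7 (Suc (n mod 4) mod 4)" by (rule g7_step) simp
  also have "\<dots> = g7 (Suc n mod 4)" by (simp add: mod_Suc_eq)
  finally show ?case .
qed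

lemma terms7: "cf_terms (sqrt 7) = t7"
proof
  fix i show "cf_terms (sqrt 7) i = t7 i"
  proof (cases i)
    case 0
    have f: "\<lfloor>sqrt (7::real)\<rfloor> = 2" by (rule fl7)
    then show ?thesis using 0 by (simp add: cf_terms_def t7_def)
  next
    case (Suc n)
    then show ?thesis using g7_floor[of "n mod 4"] unfolding cf_terms_def Suc rem7 by (simp add: t7_def)
  qed
qed

lemma t7_ge: "\<forall>i. t7 i \<ge> 1" by (simp add: t7_def tv7_def)

lemma ev7: "\<forall>n\<ge>2. small (int n - 2) (fls_X^3 * Vc t7 n ^ 2 - (fls_X^5 + fls_X^4 - fls_X - 1) * Vc t7 n
    - (fls_X^4 + 2*fls_X^3 + fls_X^2 + 2*fls_X + 1))"
proof (intro allI impI)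
  fix n :: nat assume n: "n \<ge> 2"
  obtain m where nm: "n = Suc m" and m: "m \<ge> 1" using n by (cases n) auto
  define s where "s i = t7 (Suc i)" for i
  have per: "\<forall>i. s (i + 4) = s i" by (simp add: s_def t7_def)
  define r where "r = map s [0..<m]"
  have rne: "r \<noteq> []" using m by (simp add: r_def)
  have r1: "\<forall>x\<in>set r. x \<ge> 1" using t7_ge by (auto simp: r_def s_def)
  have u4: "[0..<4] = [0::nat,1,2,3]" by (simp add: numeral_eq_Suc upt_Suc)
  have s4: "map s [0..<4] = [1,1,1,4]" unfolding u4 by (simp add: s_def t7_def tv7_def)
  have V0: "Vc t7 n = qcf True (2 # r)" unfolding Vc_def nm map_upt_Suc r_def s_def by (simp add: t7_def)
  have V1: "Vc t7 (n + 4) = qcf True (2 # 1 # 1 # 1 # 4 # r)"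
  proof -
    have e: "n + 4 = Suc (4 + m)" using nm by simp
    have "map t7 [0..<n + 4] = t7 0 # map s [0..<4 + m]" unfolding e s_def by (simp only: map_upt_Suc)
    also have "\<dots> = 2 # [1,1,1,4] @ r" unfolding period_map[OF per] s4 r_def by (simp add: t7_def)
    finally show ?thesis unfolding Vc_def by simp
  qed
  define w where "w = qcf False r"
  define z3 where "z3 = qcf True (4 # r)"
  define z2 where "z2 = qcf False (1 # 4 # r)"
  define z1 where "z1 = qcf True (1 # 1 # 4 # r)"
  define u where "u = qcf False (1 # 1 # 1 # 4 # r)"
  define c0 where "c0 = Vc t7 n"
  define c1 where "c1 = Vc t7 (n + 4)"
  have wnz: "w \<noteq> 0" using qcf_props[OF rne r1] by (simp add: w_def)
  have r4: "\<forall>x\<in>set (4 # r). x \<ge> 1" "\<forall>x\<in>set (1 # 4 # r). x \<ge> 1"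
     "\<forall>x\<in>set (1 # 1 # 4 # r). x \<ge> 1" "\<forall>x\<in>set (1 # 1 # 1 # 4 # r). x \<ge> 1" using r1 by auto
  have z3p: "z3 \<noteq> 0" "fls_subdegree z3 = 0" using qcf_props[OF _ r4(1)] unfolding z3_def by blast+
  have z2p: "z2 \<noteq> 0" "fls_subdegree z2 = -1" using qcf_False_long[OF _ r4(2)] unfolding z2_def by auto
  have z1p: "z1 \<noteq> 0" "fls_subdegree z1 = 0" using qcf_props[OF _ r4(3)] unfolding z1_def by blast+
  have up: "u \<noteq> 0" "fls_subdegree u = -1" using qcf_False_long[OF _ r4(4)] unfolding u_def by auto
  have R1: "z3*w = (1 + fls_X + fls_X^2 + fls_X^3)*w + fls_X^4"
    using rel[OF wnz, of z3 "qint True 4" "qpow True 4"] rne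
    by (simp add: z3_def w_def qcf_Cons qint4 qpow_def)
  have R2: "z2*z3 = z3 + fls_X_inv"
    using rel[OF z3p(1), of z2 1 "qpow False 1"] by (simp add: z2_def z3_def qcf_Cons qpow_def)
  have R3: "z1*z2 = z2 + fls_X"
    using rel[OF z2p(1), of z1 1 "qpow True 1"] by (simp add: z2_def z1_def qcf_Cons qpow_def)
  have R4: "u*z1 = z1 + fls_X_inv"
    using rel[OF z1p(1), of u 1 "qpow False 1"] by (simp add: u_def z1_def qcf_Cons qpow_def)
  have R5: "c0*w = (1 + fls_X)*w + fls_X^2"
    using rel[OF wnz, of c0 "qint True 2" "qpow True 2"] rne
    by (simp add: c0_def V0 w_def qcf_Cons qint2 qpow_def)
  have R6: "c1*u = (1 + fls_X)*u + fls_X^2"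
    using rel[OF up(1), of c1 "qint True 2" "qpow True 2"]
    by (simp add: c1_def V1 u_def qcf_Cons qint2 qpow_def)
  have Eq: "(fls_X^3*c0^2 - (fls_X^5+fls_X^4-fls_X-1)*c0 - (fls_X^4+2*fls_X^3+fls_X^2+2*fls_X+1))
      * (fls_X+fls_X^2+fls_X^3) = -(c1-c0) * fls_X^3 * u * z1 * z2 * z3"
    by (rule alg7[OF XXinv wnz R1 R2 R3 R4 R5 R6])
  have D: "small (int n - 2) (c1 - c0)" unfolding c0_def c1_def using far[OF t7_ge, of n "n+4"] n by simp
  have "small (int n - 2 + 3 + -1 + 0 + -1 + 0) (-(c1-c0) * fls_X^3 * u * z1 * z2 * z3)"
    by (intro small_mult small_uminus D small_sd) (simp_all add: z1p z2p z3p up)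
  then have "small (int n - 2 + 3 + -1 + 0 + -1 + 0 - 1) (fls_X^3*c0^2 - (fls_X^5+fls_X^4-fls_X-1)*c0
      - (fls_X^4+2*fls_X^3+fls_X^2+2*fls_X+1))"
    by (rule finish[OF Eq]) simp
  then show "small (int n - 2) (fls_X^3 * Vc t7 n ^ 2 - (fls_X^5 + fls_X^4 - fls_X - 1) * Vc t7 n
    - (fls_X^4 + 2*fls_X^3 + fls_X^2 + 2*fls_X + 1))" by (simp add: c0_def)
qed

lemma main7: "fps_X ^ 3 * qreal (sqrt 7) ^ 2 - (fps_X ^ 5 + fps_X ^ 4 - fps_X - 1) * qreal (sqrt 7)
           = fps_X ^ 4 + 2 * fps_X ^ 3 + fps_X ^ 2 + 2 * fps_X + 1"
proof -
  have "(fps_X ^ 3) * qreal (sqrt 7) ^ 2 + (- (fps_X ^ 5 + fps_X ^ 4 - fps_X - 1)) * qreal (sqrt 7)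
     + (- (fps_X ^ 4 + 2 * fps_X ^ 3 + fps_X ^ 2 + 2 * fps_X + 1)) = 0"
  proof (rule assemble[OF t7_ge cv_lemma[OF terms7 t7_ge]], intro allI impI)
    fix n :: nat assume "2 \<le> n"
    then have h: "small (int n - 2) (fls_X^3 * Vc t7 n ^ 2 - (fls_X^5 + fls_X^4 - fls_X - 1) * Vc t7 n
        - (fls_X^4 + 2*fls_X^3 + fls_X^2 + 2*fls_X + 1))" using ev7 by blast
    have e: "fps_to_fls (fps_X ^ 3) * Vc t7 n ^ 2 + fps_to_fls (- (fps_X ^ 5 + fps_X ^ 4 - fps_X - 1)) * Vc t7 n
     + fps_to_fls (- (fps_X ^ 4 + 2 * fps_X ^ 3 + fps_X ^ 2 + 2 * fps_X + 1)) =
      fls_X^3 * Vc t7 n ^ 2 - (fls_X^5 + fls_X^4 - fls_X - 1) * Vc t7 n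
        - (fls_X^4 + 2*fls_X^3 + fls_X^2 + 2*fls_X + 1)"
      by (simp add: fls_times_fps_to_fls algebra_simps)
    show "small (int n - 2) (fps_to_fls (fps_X ^ 3) * Vc t7 n ^ 2 + fps_to_fls (- (fps_X ^ 5 + fps_X ^ 4 - fps_X - 1)) * Vc t7 n
     + fps_to_fls (- (fps_X ^ 4 + 2 * fps_X ^ 3 + fps_X ^ 2 + 2 * fps_X + 1)))" unfolding e by (rule h)
  qed
  then show ?thesis by (simp add: algebra_simps eq_neg_iff_add_eq_0)
qed


theorem proposition4p3:
  shows "(fps_X ^ 2 * qreal (sqrt 2) ^ 2 - (fps_X ^ 3 - 1) * qreal (sqrt 2) = fps_X ^ 2 + 1) \<and>
    (fps_X ^ 2 * qreal (sqrt 3) ^ 2 - (fps_X ^ 3 + fps_X ^ 2 - fps_X - 1) * qreal (sqrt 3)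
           = fps_X ^ 2 + fps_X + 1) \<and>
    (fps_X ^ 3 * qreal (sqrt 5) ^ 2 - (fps_X ^ 5 + fps_X ^ 3 - fps_X ^ 2 - 1) * qreal (sqrt 5)
           = fps_X ^ 4 + fps_X ^ 3 + fps_X ^ 2 + fps_X + 1) \<and>
    (fps_X ^ 3 * qreal (sqrt 7) ^ 2 - (fps_X ^ 5 + fps_X ^ 4 - fps_X - 1) * qreal (sqrt 7)
           = fps_X ^ 4 + 2 * fps_X ^ 3 + fps_X ^ 2 + 2 * fps_X + 1)"
  using main2 main3 main5 main7 by blast

end
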